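(* Let $n\in\mathbb{N}$, let $c=(c_{i,j})$ be an $n\times(n+1)$ matrix with entries in $\{0,1\}$, $\sigma_1,\ldots,\sigma_n>0$, $\gamma_1,\ldots,\gamma_{n+1}>0$, with $\sum_jc_{i,j}\gamma_j>0$ for each $i$. Let $\boldsymbol{\Lambda}=(\Lambda_1,\ldots,\Lambda_n)'$ have independent coordinates $\Lambda_i\sim Exp(1)$. Let $Y_1,\ldots,Y_{n+1}$ be mutually independent with $Y_j\sim Ga(\gamma_j,1)$, and let $\boldsymbol{\Xi}=(\Xi_1,\ldots,\Xi_n)'$ with $\Xi_i=\sum_{j=1}^{n+1}\frac{c_{i,j}}{\sigma_i}Y_j$; assume $\boldsymbol{\Lambda}$ and $\boldsymbol{\Xi}$ are independent. Then a random vector $\mathbf{X}=(X_1,\ldots,X_n)'$ has decumulative distribution function \[ \mathbf{P}[X_1>x_1,\ldots,X_n>x_n]=\prod_{j=1}^{n+1}\left(1+\sum_{i=1}^n\frac{c_{i,j}}{\sigma_i}x_i\right)^{-\gamma_j},\quad (x_1,\ldots,x_n)'\in(0,\infty)^n, \] if and only if $(X_1,\ldots,X_n)'$ is equal in distribution to $(\Lambda_1/\Xi_1,\ldots,\Lambda_n/\Xi_n)'$.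
   Context: $Exp(\lambda)$ is the exponential distribution with rate $\lambda$; $Ga(\gamma,1)$ is the gamma distribution with shape $\gamma$ and rate $1$. *)

theory Defs
  imports "HOL-Probability.Probability"
begin

definition gamma_density :: "real \<Rightarrow> real \<Rightarrow> real" where
  "gamma_density k x = (if x \<le> 0 then 0 else x powr (k - 1) * exp (- x) / Gamma k)"

definition vec_law :: "'a measure \<Rightarrow> nat \<Rightarrow> (nat \<Rightarrow> 'a \<Rightarrow> real) \<Rightarrow> (nat \<Rightarrow> real) measure" where
  "vec_law M n Z = distr M (PiM {..<n} (\<lambda>_. borel)) (\<lambda>\<omega>. \<lambda>i\<in>{..<n}. Z i \<omega>)"

end

theory Submission
  imports Defs
begin

lemma gamma_laplace:
  fixes k t :: real
  assumes k: "k > 0" and t: "t \<ge> 0"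
  shows "(\<integral>\<^sup>+y. ennreal (gamma_density k y) * ennreal (exp (- t * y)) \<partial>lborel) = ennreal ((1 + t) powr (- k))"
proof -
  define g where "g y = indicator {0..} y * y powr (k - 1) / exp y" for y :: real
  define C where "C = (1+t) powr (1 - k) / Gamma k"
  have G: "Gamma k > 0" using k by (simp add: Gamma_real_pos)
  have C: "C \<ge> 0" using G by (simp add: C_def)
  have eq1: "ennreal (gamma_density k y) * ennreal (exp (- t * y)) =
      ennreal C * ennreal (g ((1 + t) * y))" for y
  proof (cases "y > 0")
    case True
    have a: "((1+t) * y) powr (k - 1) = (1+t) powr (k-1) * y powr (k-1)"
      using True t by (simp add: powr_mult)
    have b: "(1+t) powr (k-1) * (1+t) powr (1-k) = 1"
      using t by (simp add: powr_add[symmetric])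
    have e: "exp ((1+t) * y) = exp y * exp (t * y)" by (simp add: exp_add[symmetric] algebra_simps)
    have "gamma_density k y * exp (- t * y) = C * g ((1 + t) * y)"
      using True t G unfolding gamma_density_def g_def C_def a e
      by (simp add: exp_minus field_simps b)
         (metis (no_types, opaque_lifting) b mult.assoc mult.commute)
    moreover have "g ((1 + t) * y) \<ge> 0" by (simp add: g_def)
    ultimately show ?thesis using True t G C
      by (simp add: ennreal_mult[symmetric] gamma_density_def)
  next
    case False
    then have "y = 0 \<or> y < 0" by auto
    then show ?thesis
    proof
      assume "y < 0"
      moreover have "(1+t)*y < 0" using t \<open>y < 0\<close> by (intro mult_pos_neg) auto
      ultimately show ?thesis by (simp add: gamma_density_def g_def indicator_def)
    qed (simp add: gamma_density_def g_def)
  qed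
  have "(\<integral>\<^sup>+y. ennreal (gamma_density k y) * ennreal (exp (- t * y)) \<partial>lborel)
      = (\<integral>\<^sup>+y. ennreal C * ennreal (g ((1 + t) * y)) \<partial>lborel)"
    by (intro nn_integral_cong) (rule eq1)
  also have "\<dots> = ennreal C * (\<integral>\<^sup>+y. ennreal (g (0 + (1 + t) * y)) \<partial>lborel)"
    by (subst nn_integral_cmult) (auto simp: g_def)
  also have "(\<integral>\<^sup>+y. ennreal (g (0 + (1 + t) * y)) \<partial>lborel) = ennreal (1/(1+t)) * (\<integral>\<^sup>+y. ennreal (g y) \<partial>lborel)"
  proof -
    have "(\<integral>\<^sup>+y. ennreal (g y) \<partial>lborel) = ennreal \<bar>1+t\<bar> * (\<integral>\<^sup>+y. ennreal (g (0 + (1 + t) * y)) \<partial>lborel)"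
      by (rule nn_integral_real_affine) (use t in \<open>auto simp: g_def\<close>)
    moreover have h: "ennreal (1/(1+t)) * ennreal \<bar>1+t\<bar> = 1"
      using t by (simp add: ennreal_mult[symmetric] del: ennreal_plus)
    ultimately show ?thesis
      by (metis (no_types, lifting) mult.assoc mult_1)
  qed
  also have "(\<integral>\<^sup>+y. ennreal (g y) \<partial>lborel) = Gamma k"
    using Gamma_conv_nn_integral_real[OF k] by (simp add: g_def)
  finally have "(\<integral>\<^sup>+y. ennreal (gamma_density k y) * ennreal (exp (- t * y)) \<partial>lborel)
      = ennreal (C * (1/(1+t)) * Gamma k)"
    using t C G by (simp add: ennreal_mult'[symmetric] mult.assoc)
  also have "C * (1/(1+t)) * Gamma k = (1 + t) powr (- k)"
    using G t by (simp add: C_def powr_diff powr_minus divide_simps)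
  finally show ?thesis .
qed

definition orth :: "nat set \<Rightarrow> (nat \<Rightarrow> real) \<Rightarrow> (nat \<Rightarrow> real) set" where
  "orth I x = Pi\<^sub>E I (\<lambda>i. {x i<..})"

lemma orth_sets: "finite I \<Longrightarrow> sets P = sets (PiM I (\<lambda>_. borel)) \<Longrightarrow> orth I x \<in> sets P"
  unfolding orth_def by (simp add: sets_PiM_I_finite)

lemma ex_lower:
  fixes f :: "nat \<Rightarrow> real"
  assumes "finite I" shows "\<exists>m::nat. \<forall>i\<in>I. - real m < f i"
proof -
  obtain m :: nat where m: "(\<Sum>i\<in>I. \<bar>f i\<bar>) < real m" using reals_Archimedean2 by blast
  have "\<bar>f i\<bar> \<le> (\<Sum>i\<in>I. \<bar>f i\<bar>)" if "i \<in> I" for i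
    using assms that by (intro member_le_sum) auto
  then show ?thesis using m by (intro exI[of _ m]) force
qed

lemma orth_mono: "(\<forall>i\<in>I. x i \<le> y i) \<Longrightarrow> orth I y \<subseteq> orth I x"
  unfolding orth_def by (auto simp: PiE_iff intro: le_less_trans)

lemma orth_union:
  assumes "finite I"
  shows "(\<Union>m. orth I (\<lambda>i. x i + inverse (real (Suc m)))) = orth I x"
proof
  show "(\<Union>m. orth I (\<lambda>i. x i + inverse (real (Suc m)))) \<subseteq> orth I x"
    using orth_mono[of I x "\<lambda>i. x i + inverse (real (Suc m))" for m] by auto
  show "orth I x \<subseteq> (\<Union>m. orth I (\<lambda>i. x i + inverse (real (Suc m))))"
  proof
    fix f assume f: "f \<in> orth I x"
    show "f \<in> (\<Union>m. orth I (\<lambda>i. x i + inverse (real (Suc m))))"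
    proof (cases "I = {}")
      case True then show ?thesis using f by (auto simp: orth_def)
    next
      case False
      define d where "d = Min ((\<lambda>i. f i - x i) ` I)"
      have "d > 0" using f False assms by (auto simp: d_def orth_def PiE_iff)
      then obtain m where m: "inverse (real (Suc m)) < d" using reals_Archimedean by blast
      have "\<forall>i\<in>I. d \<le> f i - x i" using assms by (auto simp: d_def)
      then have "f \<in> orth I (\<lambda>i. x i + inverse (real (Suc m)))"
        using f m by (force simp: orth_def PiE_iff)
      then show ?thesis by blast
    qed
  qed
qed

lemma orth_incseq: "incseq (\<lambda>m. orth I (\<lambda>i. x i + inverse (real (Suc m))))"
proof (rule incseq_SucI)
  fix m
  have "inverse (real (Suc (Suc m))) \<le> inverse (real (Suc m))"
    by (simp add: le_imp_inverse_le)
  then show "orth I (\<lambda>i. x i + inverse (real (Suc m))) \<subseteq> orth I (\<lambda>i. x i + inverse (real (Suc (Suc m))))"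
    using orth_mono[of I "\<lambda>i. x i + inverse (real (Suc (Suc m)))" "\<lambda>i. x i + inverse (real (Suc m))"] by auto
qed

lemma orth_lim:
  assumes I: "finite I" and P: "prob_space P" and sP: "sets P = sets (PiM I (\<lambda>_. borel))"
  shows "(\<lambda>m. measure P (orth I (\<lambda>i. x i + inverse (real (Suc m))))) \<longlonglongrightarrow> measure P (orth I x)"
proof -
  interpret prob_space P by fact
  have r: "range (\<lambda>m. orth I (\<lambda>i. x i + inverse (real (Suc m)))) \<subseteq> sets P"
    using orth_sets[OF I sP] by auto
  show ?thesis
    using finite_Lim_measure_incseq[OF r orth_incseq] orth_union[OF I, of x]
    by simp
qed

lemma orth_pos:
  assumes I: "finite I" and P: "prob_space P" and sP: "sets P = sets (PiM I (\<lambda>_. borel))"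
    and P1: "measure P (orth I (\<lambda>_. 0)) = 1"
  shows "measure P (orth I x) = measure P (orth I (\<lambda>i. max (x i) 0))"
proof -
  interpret prob_space P by fact
  have "AE f in P. f \<in> orth I (\<lambda>_. 0)" using P1 by (rule AE_prob_1)
  then have "AE f in P. f \<in> orth I x \<longleftrightarrow> f \<in> orth I (\<lambda>i. max (x i) 0)"
    by eventually_elim (auto simp: orth_def PiE_iff)
  then show ?thesis by (rule measure_eq_AE) (auto intro: orth_sets[OF I sP])
qed

lemma orth_unique:
  fixes P Q :: "(nat \<Rightarrow> real) measure"
  assumes I: "finite I" and P: "prob_space P" and Q: "prob_space Q"
    and sP: "sets P = sets (PiM I (\<lambda>_. borel))" and sQ: "sets Q = sets (PiM I (\<lambda>_. borel))"
    and eq: "\<And>x. (\<forall>i\<in>I. x i > 0) \<Longrightarrow> measure P (orth I x) = measure Q (orth I x)"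
    and P1: "measure P (orth I (\<lambda>_. 0)) = 1" and Q1: "measure Q (orth I (\<lambda>_. 0)) = 1"
  shows "P = Q"
proof -
  have eq': "measure P (orth I x) = measure Q (orth I x)" for x
  proof -
    let ?y = "\<lambda>i. max (x i) 0"
    have "(\<lambda>m. measure P (orth I (\<lambda>i. ?y i + inverse (real (Suc m))))) \<longlonglongrightarrow> measure P (orth I ?y)"
      by (rule orth_lim[OF I P sP])
    moreover have "(\<lambda>m. measure Q (orth I (\<lambda>i. ?y i + inverse (real (Suc m))))) \<longlonglongrightarrow> measure Q (orth I ?y)"
      by (rule orth_lim[OF I Q sQ])
    moreover have "measure P (orth I (\<lambda>i. ?y i + inverse (real (Suc m)))) = measure Q (orth I (\<lambda>i. ?y i + inverse (real (Suc m))))" for m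
      by (rule eq) (auto intro: add_nonneg_pos)
    ultimately have "measure P (orth I ?y) = measure Q (orth I ?y)"
      using LIMSEQ_unique by auto
    then show ?thesis using orth_pos[OF I P sP P1] orth_pos[OF I Q sQ Q1] by simp
  qed
  interpret p: prob_space P by fact
  interpret q: prob_space Q by fact
  let ?E = "{orth I x | x. True}"
  let ?\<Omega> = "Pi\<^sub>E I (\<lambda>_. UNIV :: real set)"
  have gen: "sets (PiM I (\<lambda>_. borel :: real measure)) = sigma_sets ?\<Omega> ?E"
  proof -
    have h1: "sets (PiM I (\<lambda>_. sigma UNIV (range greaterThan) :: real measure)) =
      sets (sigma ?\<Omega> {{f\<in>?\<Omega>. \<forall>i\<in>j. f i \<in> A i} | A j. j \<in> {I} \<and> A \<in> Pi j (\<lambda>_. range greaterThan)})"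
    proof (rule sets_PiM_sigma)
      show "\<exists>S\<subseteq>range greaterThan. countable S \<and> (UNIV::real set) = \<Union>S" for i
      proof (intro exI[of _ "range (\<lambda>m::nat. {- real m<..})"] conjI)
        show "(UNIV::real set) = \<Union>(range (\<lambda>m::nat. {- real m<..}))"
        proof safe
          fix y :: real
          obtain m :: nat where "- y < real m" using reals_Archimedean2 by blast
          then have "y \<in> {- real m<..}" by auto
          then show "y \<in> \<Union>(range (\<lambda>m::nat. {- real m<..}))" by blast
        qed auto
      qed auto
    qed (use I in auto)
    have h2: "{{f\<in>?\<Omega>. \<forall>i\<in>j. f i \<in> A i} | A j. j \<in> {I} \<and> A \<in> Pi j (\<lambda>_. range greaterThan)} = ?E"
    proof (intro equalityI subsetI)
      fix X assume "X \<in> {{f\<in>?\<Omega>. \<forall>i\<in>j. f i \<in> A i} | A j. j \<in> {I} \<and> A \<in> Pi j (\<lambda>_. range greaterThan)}"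
      then obtain A j where X0: "X = {f\<in>?\<Omega>. \<forall>i\<in>j. f i \<in> A i}" and j: "j \<in> {I}"
         and A0: "A \<in> Pi j (\<lambda>_. range greaterThan)"
        unfolding mem_Collect_eq by (elim exE conjE)
      from j have j: "j = I" by simp
      have X: "X = {f\<in>?\<Omega>. \<forall>i\<in>I. f i \<in> A i}" and A: "A \<in> Pi I (\<lambda>_. range greaterThan)"
        using X0 A0 j by simp_all
      from A have "\<forall>i\<in>I. \<exists>a. A i = {a<..}" by auto
      then obtain a where "\<forall>i\<in>I. A i = {a i<..}" by metis
      then have "X = orth I a" unfolding X by (auto simp: orth_def PiE_iff extensional_def)
      then show "X \<in> ?E" unfolding mem_Collect_eq by (intro exI[of _ a]) simp
    next
      fix X assume "X \<in> ?E"
      then obtain x where X: "X = orth I x" unfolding mem_Collect_eq by (elim exE conjE)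
      have "X = {f\<in>?\<Omega>. \<forall>i\<in>I. f i \<in> {x i<..}}" unfolding X by (auto simp: orth_def PiE_iff extensional_def)
      moreover have "(\<lambda>i. {x i<..}) \<in> Pi I (\<lambda>_. range greaterThan)" by auto
      ultimately show "X \<in> {{f\<in>?\<Omega>. \<forall>i\<in>j. f i \<in> A i} | A j. j \<in> {I} \<and> A \<in> Pi j (\<lambda>_. range greaterThan)}"
        unfolding mem_Collect_eq by (intro exI[of _ "\<lambda>i. {x i<..}"] exI[of _ I] conjI) simp_all
    qed
    have h3: "sets (PiM I (\<lambda>_. borel :: real measure)) = sets (PiM I (\<lambda>_. sigma UNIV (range greaterThan) :: real measure))"
      by (simp only: borel_Ioi)
    have h4: "sets (sigma ?\<Omega> ?E) = sigma_sets ?\<Omega> ?E"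
      by (rule sets_measure_of) (auto simp: orth_def)
    show ?thesis unfolding h3 h1 h2 h4 ..
  qed
  show ?thesis
  proof (rule measure_eqI_generator_eq[of ?E ?\<Omega> _ _ "\<lambda>m. orth I (\<lambda>_. - real m)"])
    show "Int_stable ?E"
    proof (rule Int_stableI)
      fix a b assume "a \<in> ?E" "b \<in> ?E"
      then obtain x y where xy: "a = orth I x" "b = orth I y" by blast
      then have "a \<inter> b = orth I (\<lambda>i. max (x i) (y i))" by (auto simp: orth_def PiE_iff)
      then show "a \<inter> b \<in> ?E" by blast
    qed
    show "?E \<subseteq> Pow ?\<Omega>" by (auto simp: orth_def)
    show "emeasure P X = emeasure Q X" if hX: "X \<in> ?E" for X
    proof -
      obtain x where "X = orth I x" using hX by blast
      then show ?thesis by (simp add: p.emeasure_eq_measure q.emeasure_eq_measure eq')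
    qed
    show "sets P = sigma_sets ?\<Omega> ?E" using sP gen by simp
    show "sets Q = sigma_sets ?\<Omega> ?E" using sQ gen by simp
    show "range (\<lambda>m. orth I (\<lambda>_. - real m)) \<subseteq> ?E" by auto
    show "(\<Union>m. orth I (\<lambda>_. - real m)) = ?\<Omega>"
      using ex_lower[OF I] by (auto simp: orth_def PiE_iff)
    show "emeasure P (orth I (\<lambda>_. - real m)) \<noteq> \<infinity>" for m
      by (simp add: p.emeasure_eq_measure)
  qed
qed

lemma P1_from_formula:
  assumes I: "finite I" and P: "prob_space P" and sP: "sets P = sets (PiM I (\<lambda>_. borel))"
    and G: "\<And>x. (\<forall>i\<in>I. x i > 0) \<Longrightarrow> measure P (orth I x) = G x"
    and lim: "(\<lambda>m. G (\<lambda>i. 0 + inverse (real (Suc m)))) \<longlonglongrightarrow> 1"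
  shows "measure P (orth I (\<lambda>_. 0)) = 1"
proof -
  have "(\<lambda>m. measure P (orth I (\<lambda>i. 0 + inverse (real (Suc m))))) \<longlonglongrightarrow> measure P (orth I (\<lambda>_. 0))"
    using orth_lim[OF I P sP, of "\<lambda>_. 0"] by simp
  moreover have "measure P (orth I (\<lambda>i. 0 + inverse (real (Suc m)))) = G (\<lambda>i. 0 + inverse (real (Suc m)))" for m
    by (rule G) simp
  ultimately show ?thesis using lim LIMSEQ_unique by auto
qed

lemma F_lim:
  fixes c :: "nat \<Rightarrow> nat \<Rightarrow> real"
  shows "(\<lambda>m. (\<Prod>j<n+1. (1 + (\<Sum>i<n. c i j / \<sigma> i * (0 + inverse (real (Suc m))))) powr (- \<gamma> j))) \<longlonglongrightarrow> 1"
proof -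
  have "(\<lambda>m. (\<Prod>j<n+1. (1 + (\<Sum>i<n. c i j / \<sigma> i * (0 + inverse (real (Suc m))))) powr (- \<gamma> j)))
     \<longlonglongrightarrow> (\<Prod>j<n+1. (1 + (\<Sum>i<n. c i j / \<sigma> i * 0)) powr (- \<gamma> j))"
    using LIMSEQ_inverse_real_of_nat by (intro tendsto_intros) auto
  then show ?thesis by simp
qed


lemma (in prob_space) exp_orthant:
  assumes D: "\<forall>i\<in>I. distributed M lborel (X i) (exponential_density 1)"
    and ind: "indep_vars (\<lambda>_. borel) X I" and I: "finite I" and a: "\<forall>i\<in>I. a i \<ge> 0"
  shows "prob {\<omega> \<in> space M. \<forall>i\<in>I. a i < X i \<omega>} = (\<Prod>i\<in>I. exp (- a i))"
proof (cases "I = {}")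
  case True then show ?thesis by (simp add: prob_space)
next
  case False
  have ie: "indep_events (\<lambda>i. {\<omega> \<in> space M. a i < X i \<omega>}) I"
    by (rule indep_eventsI_indep_vars[OF ind]) simp
  then have "prob (\<Inter>i\<in>I. {\<omega> \<in> space M. a i < X i \<omega>}) = (\<Prod>i\<in>I. prob {\<omega> \<in> space M. a i < X i \<omega>})"
    using False I unfolding indep_events_def by blast
  moreover have "(\<Inter>i\<in>I. {\<omega> \<in> space M. a i < X i \<omega>}) = {\<omega> \<in> space M. \<forall>i\<in>I. a i < X i \<omega>}"
    using False by auto
  moreover have "prob {\<omega> \<in> space M. a i < X i \<omega>} = exp (- a i)" if "i \<in> I" for i
    using exponential_distributedD_gt[of "X i" 1 "a i"] D a that by simp
  ultimately show ?thesis by simp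
qed

lemma (in prob_space) gamma_pos:
  assumes D: "distributed M lborel Y (gamma_density k)"
  shows "AE \<omega> in M. Y \<omega> > 0"
proof -
  have m: "Y \<in> measurable M lborel" by (rule distributed_measurable[OF D])
  have fm: "(\<lambda>y. ennreal (gamma_density k y)) \<in> borel_measurable lborel"
    by (rule distributed_borel_measurable[OF D])
  have "AE y in lborel. 0 < ennreal (gamma_density k y) \<longrightarrow> y > 0"
    by (rule AE_I2) (simp add: gamma_density_def)
  then have "AE y in density lborel (\<lambda>y. ennreal (gamma_density k y)). y > 0"
    by (simp only: AE_density[OF fm])
  then have ae: "AE y in distr M lborel Y. y > 0"
    by (simp only: distributed_distr_eq_density[OF D])
  have S: "{x \<in> space lborel. 0 < (x::real)} \<in> sets lborel" by measurable
  show ?thesis using AE_distr_iff[OF m S] ae by simp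
qed

lemma (in prob_space) gamma_laplace_rv:
  assumes D: "distributed M lborel Y (gamma_density k)" and k: "k > 0" and t: "t \<ge> 0"
  shows "(\<integral>\<^sup>+\<omega>. ennreal (exp (- t * Y \<omega>)) \<partial>M) = ennreal ((1 + t) powr (- k))"
proof -
  have "(\<integral>\<^sup>+\<omega>. ennreal (exp (- t * Y \<omega>)) \<partial>M) = (\<integral>\<^sup>+y. ennreal (gamma_density k y) * ennreal (exp (- t * y)) \<partial>lborel)"
    by (rule distributed_nn_integral[OF D, symmetric]) simp
  also have "\<dots> = ennreal ((1 + t) powr (- k))" by (rule gamma_laplace[OF k t])
  finally show ?thesis .
qed

lemma preim:
  "(\<lambda>\<omega>. \<lambda>i\<in>{..<n}. Z i \<omega>) -` orth {..<n} x \<inter> space M = {\<omega> \<in> space M. \<forall>i<n. Z i \<omega> > x i}"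
proof (rule set_eqI)
  fix \<omega>
  have "(\<lambda>i\<in>{..<n}. Z i \<omega>) \<in> orth {..<n} x \<longleftrightarrow> (\<forall>i\<in>{..<n}. Z i \<omega> \<in> {x i<..})"
    unfolding orth_def by (rule restrict_PiE_iff)
  then show "\<omega> \<in> (\<lambda>\<omega>. \<lambda>i\<in>{..<n}. Z i \<omega>) -` orth {..<n} x \<inter> space M \<longleftrightarrow> \<omega> \<in> {\<omega> \<in> space M. \<forall>i<n. Z i \<omega> > x i}"
    by (simp add: Ball_def conj_commute)
qed
lemma vec_law_facts:
  assumes "prob_space M" "\<forall>i<n. Z i \<in> borel_measurable M"
  shows "prob_space (vec_law M n Z)" "sets (vec_law M n Z) = sets (PiM {..<n} (\<lambda>_. borel))"
    "measure M {\<omega> \<in> space M. \<forall>i<n. Z i \<omega> > x i} = measure (vec_law M n Z) (orth {..<n} x)"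
proof -
  have m: "(\<lambda>\<omega>. \<lambda>i\<in>{..<n}. Z i \<omega>) \<in> measurable M (PiM {..<n} (\<lambda>_. borel))"
    by (rule measurable_restrict) (simp add: assms(2))
  show "prob_space (vec_law M n Z)" unfolding vec_law_def
    by (rule prob_space.prob_space_distr[OF assms(1) m])
  show "sets (vec_law M n Z) = sets (PiM {..<n} (\<lambda>_. borel))" unfolding vec_law_def by simp
  have "measure (vec_law M n Z) (orth {..<n} x) = measure M ((\<lambda>\<omega>. \<lambda>i\<in>{..<n}. Z i \<omega>) -` orth {..<n} x \<inter> space M)"
    unfolding vec_law_def by (rule measure_distr[OF m]) (rule orth_sets, auto)
  also have "(\<lambda>\<omega>. \<lambda>i\<in>{..<n}. Z i \<omega>) -` orth {..<n} x \<inter> space M = {\<omega> \<in> space M. \<forall>i<n. Z i \<omega> > x i}"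
    by (rule preim)
  finally show "measure M {\<omega> \<in> space M. \<forall>i<n. Z i \<omega> > x i} = measure (vec_law M n Z) (orth {..<n} x)" ..
qed



lemma surv_LX:
  fixes n :: nat
    and c :: "nat \<Rightarrow> nat \<Rightarrow> real"
    and \<sigma> :: "nat \<Rightarrow> real" and \<gamma> :: "nat \<Rightarrow> real"
    and N :: "'b measure" and \<Lambda> :: "nat \<Rightarrow> 'b \<Rightarrow> real" and Y :: "nat \<Rightarrow> 'b \<Rightarrow> real"
    and \<Xi> :: "nat \<Rightarrow> 'b \<Rightarrow> real"
  assumes c01: "\<forall>i<n. \<forall>j<n+1. c i j \<in> {0, 1}"
    and \<sigma>_pos: "\<forall>i<n. \<sigma> i > 0"
    and \<gamma>_pos: "\<forall>j<n+1. \<gamma> j > 0"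
    and c\<gamma>_pos: "\<forall>i<n. (\<Sum>j<n+1. c i j * \<gamma> j) > 0"
    and N_prob: "prob_space N"
    and \<Lambda>_exp: "\<forall>i<n. distributed N lborel (\<Lambda> i) (exponential_density 1)"
    and \<Lambda>_indep: "prob_space.indep_vars N (\<lambda>_. borel) \<Lambda> {..<n}"
    and Y_gamma: "\<forall>j<n+1. distributed N lborel (Y j) (gamma_density (\<gamma> j))"
    and Y_indep: "prob_space.indep_vars N (\<lambda>_. borel) Y {..<n+1}"
    and \<Xi>_def: "\<forall>i<n. \<forall>\<omega>. \<Xi> i \<omega> = (\<Sum>j<n+1. c i j / \<sigma> i * Y j \<omega>)"
    and \<Lambda>\<Xi>_indep: "prob_space.indep_var N
        (PiM {..<n} (\<lambda>_. borel)) (\<lambda>\<omega>. \<lambda>i\<in>{..<n}. \<Lambda> i \<omega>)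
        (PiM {..<n} (\<lambda>_. borel)) (\<lambda>\<omega>. \<lambda>i\<in>{..<n}. \<Xi> i \<omega>)"
    and x: "\<forall>i<n. x i > 0"
  shows "measure (vec_law N n (\<lambda>i \<omega>. \<Lambda> i \<omega> / \<Xi> i \<omega>)) (orth {..<n} x)
     = (\<Prod>j<n+1. (1 + (\<Sum>i<n. c i j / \<sigma> i * x i)) powr (- \<gamma> j))"
proof -
  interpret prob_space N by (rule N_prob)
  define I where "I = {..<n}"
  define J where "J = {..<n+1}"
  define PI where "PI = PiM I (\<lambda>_. borel :: real measure)"
  define t where "t j = (\<Sum>i<n. c i j / \<sigma> i * x i)" for j
  have I: "finite I" by (simp add: I_def)
  have J: "finite J" by (simp add: J_def)
  have Lm[measurable]: "\<Lambda> i \<in> borel_measurable N" if "i \<in> I" for i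
    using distributed_measurable[OF \<Lambda>_exp[rule_format, of i]] that by (simp add: I_def)
  have Ym[measurable]: "Y j \<in> borel_measurable N" if "j \<in> J" for j
    using distributed_measurable[OF Y_gamma[rule_format, of j]] that by (simp add: J_def)
  have Xi_eq: "\<Xi> i = (\<lambda>\<omega>. \<Sum>j\<in>J. c i j / \<sigma> i * Y j \<omega>)" if "i \<in> I" for i
    using \<Xi>_def that by (auto simp: I_def J_def)
  have Xim[measurable]: "\<Xi> i \<in> borel_measurable N" if "i \<in> I" for i
    unfolding Xi_eq[OF that] by (intro borel_measurable_sum borel_measurable_times borel_measurable_const Ym)
  have Ypos: "AE \<omega> in N. \<forall>j\<in>J. Y j \<omega> > 0"
  proof (rule AE_finite_allI[OF J])
    fix j assume "j \<in> J"
    then show "AE \<omega> in N. Y j \<omega> > 0"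
      using Y_gamma by (intro gamma_pos[where k="\<gamma> j"]) (simp add: J_def)
  qed
  have cpos: "\<exists>j\<in>J. c i j = 1" if i: "i \<in> I" for i
  proof (rule ccontr)
    assume "\<not> (\<exists>j\<in>J. c i j = 1)"
    then have "\<forall>j\<in>J. c i j = 0" using c01 i by (auto simp: I_def J_def)
    then have "(\<Sum>j<n+1. c i j * \<gamma> j) = 0" by (simp add: J_def)
    moreover have "(\<Sum>j<n+1. c i j * \<gamma> j) > 0" using c\<gamma>_pos i by (simp only: I_def lessThan_iff)
    ultimately show False by linarith
  qed
  have cnn: "c i j \<ge> 0" if "i \<in> I" "j \<in> J" for i j
  proof -
    have "c i j \<in> {0, 1}" using c01 that by (simp add: I_def J_def)
    then show ?thesis by auto
  qed
  have Xipos: "AE \<omega> in N. \<forall>i\<in>I. \<Xi> i \<omega> > 0"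
    using Ypos
  proof eventually_elim
    case (elim \<omega>)
    show ?case
    proof
      fix i assume i: "i \<in> I"
      obtain j0 where j0: "j0 \<in> J" "c i j0 = 1" using cpos[OF i] by blast
      have si: "\<sigma> i > 0" using \<sigma>_pos i by (simp add: I_def)
      have nn: "0 \<le> c i j / \<sigma> i * Y j \<omega>" if "j \<in> J" for j
        using cnn[OF i that] si elim that by (simp add: less_imp_le)
      have "c i j0 / \<sigma> i * Y j0 \<omega> \<le> (\<Sum>j\<in>J. c i j / \<sigma> i * Y j \<omega>)"
        by (rule member_le_sum[OF j0(1)]) (use nn J in auto)
      moreover have "c i j0 / \<sigma> i * Y j0 \<omega> > 0" using j0 si elim by simp
      ultimately show "\<Xi> i \<omega> > 0" using Xi_eq[OF i] by simp
    qed
  qed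
  have Lrv: "\<forall>i<n. (\<lambda>\<omega>. \<Lambda> i \<omega> / \<Xi> i \<omega>) \<in> borel_measurable N"
    using Lm Xim by (auto simp: I_def)
  define L where "L \<omega> = (\<lambda>i\<in>I. \<Lambda> i \<omega>)" for \<omega>
  define Z where "Z \<omega> = (\<lambda>i\<in>I. \<Xi> i \<omega>)" for \<omega>
  have Lmeas: "L \<in> measurable N PI" unfolding L_def PI_def by (rule measurable_restrict) (rule Lm)
  have Zmeas: "Z \<in> measurable N PI" unfolding Z_def PI_def by (rule measurable_restrict) (rule Xim)
  define E where "E = {\<omega> \<in> space N. \<forall>i<n. \<Lambda> i \<omega> / \<Xi> i \<omega> > x i}"
  have step1: "measure (vec_law N n (\<lambda>i \<omega>. \<Lambda> i \<omega> / \<Xi> i \<omega>)) (orth {..<n} x) = prob E"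
    unfolding E_def by (rule vec_law_facts(3)[OF N_prob Lrv, symmetric])
  define S where "S = {p \<in> space (PI \<Otimes>\<^sub>M PI). \<forall>i\<in>I. x i < fst p i / snd p i}"
  have S: "S \<in> sets (PI \<Otimes>\<^sub>M PI)"
    unfolding S_def PI_def using I by measurable
  have LZm: "(\<lambda>\<omega>. (L \<omega>, Z \<omega>)) \<in> measurable N (PI \<Otimes>\<^sub>M PI)"
    by (rule measurable_Pair[OF Lmeas Zmeas])
  have E_eq: "E = (\<lambda>\<omega>. (L \<omega>, Z \<omega>)) -` S \<inter> space N"
  proof (rule set_eqI)
    fix \<omega>
    have sp: "\<omega> \<in> space N \<Longrightarrow> (L \<omega>, Z \<omega>) \<in> space (PI \<Otimes>\<^sub>M PI)"
      using measurable_space[OF LZm] by blast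
    have eq: "(\<forall>i<n. \<Lambda> i \<omega> / \<Xi> i \<omega> > x i) \<longleftrightarrow> (\<forall>i\<in>I. x i < fst (L \<omega>, Z \<omega>) i / snd (L \<omega>, Z \<omega>) i)"
      by (simp add: L_def Z_def I_def Ball_def)
    show "\<omega> \<in> E \<longleftrightarrow> \<omega> \<in> (\<lambda>\<omega>. (L \<omega>, Z \<omega>)) -` S \<inter> space N"
      unfolding E_def S_def using sp eq by blast
  qed
  define DL where "DL = distr N PI L"
  define DZ where "DZ = distr N PI Z"
  have DL: "prob_space DL" unfolding DL_def by (rule prob_space_distr[OF Lmeas])
  have DZ: "prob_space DZ" unfolding DZ_def by (rule prob_space_distr[OF Zmeas])
  interpret pp: pair_prob_space DL DZ using DL DZ by (simp add: pair_prob_space_def pair_sigma_finite_def prob_space_imp_sigma_finite)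
  have joint: "distr N (PI \<Otimes>\<^sub>M PI) (\<lambda>\<omega>. (L \<omega>, Z \<omega>)) = DL \<Otimes>\<^sub>M DZ"
    using \<Lambda>\<Xi>_indep unfolding indep_var_distribution_eq DL_def DZ_def L_def Z_def PI_def I_def by simp
  have "emeasure N E = emeasure (DL \<Otimes>\<^sub>M DZ) S"
    unfolding E_eq joint[symmetric] by (rule emeasure_distr[OF LZm S, symmetric])
  also have "\<dots> = (\<integral>\<^sup>+z. emeasure DL ((\<lambda>l. (l, z)) -` S) \<partial>DZ)"
  proof (rule pp.emeasure_pair_measure_alt2)
    have "sets (DL \<Otimes>\<^sub>M DZ) = sets (PI \<Otimes>\<^sub>M PI)"
      by (rule sets_pair_measure_cong) (simp_all add: DL_def DZ_def)
    then show "S \<in> sets (DL \<Otimes>\<^sub>M DZ)" using S by simp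
  qed
  also have "\<dots> = (\<integral>\<^sup>+z. ennreal (\<Prod>i\<in>I. exp (- (x i * z i))) \<partial>DZ)"
  proof (rule nn_integral_cong_AE)
    have Pm: "{z \<in> space PI. \<forall>i\<in>I. 0 < z i} \<in> sets PI"
      unfolding PI_def using I by measurable
    have "AE \<omega> in N. \<forall>i\<in>I. 0 < Z \<omega> i"
      using Xipos by eventually_elim (simp add: Z_def)
    then have ae1: "AE z in DZ. \<forall>i\<in>I. 0 < z i"
      unfolding DZ_def by (subst AE_distr_iff[OF Zmeas Pm])
    have ae2: "AE z in DZ. z \<in> space PI"
      by (rule AE_I2) (simp add: DZ_def)
    show "AE z in DZ. emeasure DL ((\<lambda>l. (l, z)) -` S) = ennreal (\<Prod>i\<in>I. exp (- (x i * z i)))"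
      using ae1 ae2
    proof eventually_elim
      case (elim z)
      have pre: "(\<lambda>l. (l, z)) -` S = {l \<in> space PI. \<forall>i\<in>I. x i * z i < l i}"
      proof (rule set_eqI)
        fix l
        have "(\<forall>i\<in>I. x i < l i / z i) \<longleftrightarrow> (\<forall>i\<in>I. x i * z i < l i)"
          using elim(1) by (simp add: pos_less_divide_eq)
        then show "l \<in> (\<lambda>l. (l, z)) -` S \<longleftrightarrow> l \<in> {l \<in> space PI. \<forall>i\<in>I. x i * z i < l i}"
          unfolding S_def using elim(2) by (simp add: space_pair_measure)
      qed
      have Qm: "{l \<in> space PI. \<forall>i\<in>I. x i * z i < l i} \<in> sets PI"
        unfolding PI_def using I by measurable
      have "emeasure DL {l \<in> space PI. \<forall>i\<in>I. x i * z i < l i}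
          = emeasure N (L -` {l \<in> space PI. \<forall>i\<in>I. x i * z i < l i} \<inter> space N)"
        unfolding DL_def by (rule emeasure_distr[OF Lmeas Qm])
      also have "L -` {l \<in> space PI. \<forall>i\<in>I. x i * z i < l i} \<inter> space N
          = {\<omega> \<in> space N. \<forall>i\<in>I. x i * z i < \<Lambda> i \<omega>}"
        using measurable_space[OF Lmeas] by (auto simp: L_def)
      also have "emeasure N {\<omega> \<in> space N. \<forall>i\<in>I. x i * z i < \<Lambda> i \<omega>} = ennreal (\<Prod>i\<in>I. exp (- (x i * z i)))"
      proof -
        have "prob {\<omega> \<in> space N. \<forall>i\<in>I. x i * z i < \<Lambda> i \<omega>} = (\<Prod>i\<in>I. exp (- (x i * z i)))"
        proof (rule exp_orthant)
          show "\<forall>i\<in>I. distributed N lborel (\<Lambda> i) (exponential_density 1)" using \<Lambda>_exp by (simp add: I_def)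
          show "indep_vars (\<lambda>_. borel) \<Lambda> I" using \<Lambda>_indep by (simp add: I_def)
          show "finite I" by (rule I)
          show "\<forall>i\<in>I. 0 \<le> x i * z i" using x elim(1) by (simp add: I_def less_imp_le)
        qed
        then show ?thesis by (simp add: emeasure_eq_measure)
      qed
      finally show ?case unfolding pre .
    qed
  qed
  also have "\<dots> = (\<integral>\<^sup>+\<omega>. ennreal (\<Prod>i\<in>I. exp (- (x i * Z \<omega> i))) \<partial>N)"
    unfolding DZ_def by (rule nn_integral_distr[OF Zmeas]) (unfold PI_def, use I in measurable)
  also have "\<dots> = (\<integral>\<^sup>+\<omega>. ennreal (\<Prod>i\<in>I. exp (- (x i * \<Xi> i \<omega>))) \<partial>N)"
    by (intro nn_integral_cong arg_cong[where f=ennreal] prod.cong) (simp_all add: Z_def)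
  also have "\<dots> = (\<integral>\<^sup>+\<omega>. ennreal (\<Prod>j\<in>J. exp (- t j * Y j \<omega>)) \<partial>N)"
  proof (intro nn_integral_cong arg_cong[where f=ennreal])
    fix \<omega>
    have "(\<Sum>i\<in>I. - (x i * \<Xi> i \<omega>)) = (\<Sum>i\<in>I. \<Sum>j\<in>J. - (x i * (c i j / \<sigma> i * Y j \<omega>)))"
      by (intro sum.cong) (simp_all add: Xi_eq sum_distrib_left sum_negf)
    also have "\<dots> = (\<Sum>j\<in>J. \<Sum>i\<in>I. - (x i * (c i j / \<sigma> i * Y j \<omega>)))"
      by (rule sum.swap)
    also have "\<dots> = (\<Sum>j\<in>J. - t j * Y j \<omega>)"
      by (intro sum.cong) (simp_all add: t_def I_def sum_distrib_right sum_negf algebra_simps sum_distrib_left)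
    finally have "(\<Sum>i\<in>I. - (x i * \<Xi> i \<omega>)) = (\<Sum>j\<in>J. - t j * Y j \<omega>)" .
    then show "(\<Prod>i\<in>I. exp (- (x i * \<Xi> i \<omega>))) = (\<Prod>j\<in>J. exp (- t j * Y j \<omega>))"
      by (simp add: exp_sum[OF I, symmetric] exp_sum[OF J, symmetric])
  qed
  also have "\<dots> = (\<integral>\<^sup>+\<omega>. (\<Prod>j\<in>J. ennreal (exp (- t j * Y j \<omega>))) \<partial>N)"
    by (simp add: prod_ennreal)
  also have "\<dots> = (\<Prod>j\<in>J. \<integral>\<^sup>+\<omega>. ennreal (exp (- t j * Y j \<omega>)) \<partial>N)"
  proof (rule indep_vars_nn_integral[OF J])
    show "indep_vars (\<lambda>_. borel) (\<lambda>j \<omega>. ennreal (exp (- t j * Y j \<omega>))) J"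
      by (rule indep_vars_compose2[where X=Y and M'="\<lambda>_. borel"]) (use Y_indep in \<open>simp_all add: J_def\<close>)
  qed simp
  also have "\<dots> = (\<Prod>j\<in>J. ennreal ((1 + t j) powr (- \<gamma> j)))"
  proof (rule prod.cong[OF refl])
    fix j assume j: "j \<in> J"
    have "t j \<ge> 0" unfolding t_def
    proof (rule sum_nonneg)
      fix i assume i: "i \<in> {..<n}"
      then have "c i j \<in> {0, 1}" using c01 j by (simp add: J_def)
      then have "c i j \<ge> 0" by auto
      moreover have "\<sigma> i > 0" "x i > 0" using \<sigma>_pos x i by auto
      ultimately show "0 \<le> c i j / \<sigma> i * x i" by simp
    qed
    then show "(\<integral>\<^sup>+\<omega>. ennreal (exp (- t j * Y j \<omega>)) \<partial>N) = ennreal ((1 + t j) powr (- \<gamma> j))"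
      using gamma_laplace_rv[of "Y j" "\<gamma> j" "t j"] Y_gamma \<gamma>_pos j by (simp add: J_def)
  qed
  also have "\<dots> = ennreal (\<Prod>j\<in>J. (1 + t j) powr (- \<gamma> j))"
    by (rule prod_ennreal) simp
  finally have "prob E = (\<Prod>j\<in>J. (1 + t j) powr (- \<gamma> j))"
    by (simp add: emeasure_eq_measure prod_nonneg)
  then show ?thesis using step1 by (simp add: J_def t_def)
qed
theorem theorem2p2:
  fixes n :: nat
    and c :: "nat \<Rightarrow> nat \<Rightarrow> real"
    and \<sigma> :: "nat \<Rightarrow> real" and \<gamma> :: "nat \<Rightarrow> real"
    and M :: "'a measure" and X :: "nat \<Rightarrow> 'a \<Rightarrow> real"
    and N :: "'b measure" and \<Lambda> :: "nat \<Rightarrow> 'b \<Rightarrow> real" and Y :: "nat \<Rightarrow> 'b \<Rightarrow> real"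
    and \<Xi> :: "nat \<Rightarrow> 'b \<Rightarrow> real"
  assumes c01: "\<forall>i<n. \<forall>j<n+1. c i j \<in> {0, 1}"
    and \<sigma>_pos: "\<forall>i<n. \<sigma> i > 0"
    and \<gamma>_pos: "\<forall>j<n+1. \<gamma> j > 0"
    and c\<gamma>_pos: "\<forall>i<n. (\<Sum>j<n+1. c i j * \<gamma> j) > 0"
    and N_prob: "prob_space N"
    and \<Lambda>_exp: "\<forall>i<n. distributed N lborel (\<Lambda> i) (exponential_density 1)"
    and \<Lambda>_indep: "prob_space.indep_vars N (\<lambda>_. borel) \<Lambda> {..<n}"
    and Y_gamma: "\<forall>j<n+1. distributed N lborel (Y j) (gamma_density (\<gamma> j))"
    and Y_indep: "prob_space.indep_vars N (\<lambda>_. borel) Y {..<n+1}"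
    and \<Xi>_def: "\<forall>i<n. \<forall>\<omega>. \<Xi> i \<omega> = (\<Sum>j<n+1. c i j / \<sigma> i * Y j \<omega>)"
    and \<Lambda>\<Xi>_indep: "prob_space.indep_var N
        (PiM {..<n} (\<lambda>_. borel)) (\<lambda>\<omega>. \<lambda>i\<in>{..<n}. \<Lambda> i \<omega>)
        (PiM {..<n} (\<lambda>_. borel)) (\<lambda>\<omega>. \<lambda>i\<in>{..<n}. \<Xi> i \<omega>)"
    and M_prob: "prob_space M"
    and X_rv: "\<forall>i<n. X i \<in> borel_measurable M"
  shows "(\<forall>x :: nat \<Rightarrow> real. (\<forall>i<n. x i > 0) \<longrightarrow>
            measure M {\<omega> \<in> space M. \<forall>i<n. X i \<omega> > x i}
              = (\<Prod>j<n+1. (1 + (\<Sum>i<n. c i j / \<sigma> i * x i)) powr (- \<gamma> j)))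
         \<longleftrightarrow> vec_law M n X = vec_law N n (\<lambda>i \<omega>. \<Lambda> i \<omega> / \<Xi> i \<omega>)"
proof -
  define F where "F x = (\<Prod>j<n+1. (1 + (\<Sum>i<n. c i j / \<sigma> i * x i)) powr (- \<gamma> j))" for x :: "nat \<Rightarrow> real"
  let ?PX = "vec_law M n X" and ?PN = "vec_law N n (\<lambda>i \<omega>. \<Lambda> i \<omega> / \<Xi> i \<omega>)"
  have I: "finite {..<n}" by simp
  have A: "measure ?PN (orth {..<n} x) = F x" if "\<forall>i\<in>{..<n}. x i > 0" for x
    unfolding F_def by (rule surv_LX[OF assms(1-11)]) (use that in auto)
  have Lrv: "\<forall>i<n. (\<lambda>\<omega>. \<Lambda> i \<omega> / \<Xi> i \<omega>) \<in> borel_measurable N"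
  proof safe
    fix i assume i: "i < n"
    have "\<Lambda> i \<in> borel_measurable N" using \<Lambda>_exp i by (auto dest!: distributed_measurable)
    moreover have "Y j \<in> borel_measurable N" if "j < n+1" for j
      using Y_gamma that by (auto dest!: distributed_measurable)
    then have "(\<lambda>\<omega>. \<Sum>j<n+1. c i j / \<sigma> i * Y j \<omega>) \<in> borel_measurable N" by auto
    moreover have "\<Xi> i = (\<lambda>\<omega>. \<Sum>j<n+1. c i j / \<sigma> i * Y j \<omega>)" using \<Xi>_def i by auto
    ultimately show "(\<lambda>\<omega>. \<Lambda> i \<omega> / \<Xi> i \<omega>) \<in> borel_measurable N" by auto
  qed
  note PX = vec_law_facts[OF M_prob X_rv] and PN = vec_law_facts[OF N_prob Lrv]
  have FL: "(\<lambda>m. F (\<lambda>i. 0 + inverse (real (Suc m)))) \<longlonglongrightarrow> 1"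
    unfolding F_def by (rule F_lim)
  have PN1: "measure ?PN (orth {..<n} (\<lambda>_. 0)) = 1"
    by (rule P1_from_formula[OF I PN(1,2) A FL])
  show ?thesis unfolding F_def[symmetric]
  proof
    assume H: "\<forall>x. (\<forall>i<n. x i > 0) \<longrightarrow> measure M {\<omega> \<in> space M. \<forall>i<n. X i \<omega> > x i} = F x"
    have AX: "measure ?PX (orth {..<n} x) = F x" if "\<forall>i\<in>{..<n}. x i > 0" for x
      using H that PX(3)[of x] by auto
    have PX1: "measure ?PX (orth {..<n} (\<lambda>_. 0)) = 1"
      by (rule P1_from_formula[OF I PX(1,2) AX FL])
    show "?PX = ?PN"
      by (rule orth_unique[OF I PX(1) PN(1) PX(2) PN(2) _ PX1 PN1]) (simp add: AX A)
  next
    assume H: "?PX = ?PN"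
    show "\<forall>x. (\<forall>i<n. x i > 0) \<longrightarrow> measure M {\<omega> \<in> space M. \<forall>i<n. X i \<omega> > x i} = F x"
      using PX(3) A H by auto
  qed
qed
end
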